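(* Let $m\in\mathbb{N}$ and let $f$ be a multiplicative function with $f(p)\to1$ as $p\to\infty$ over primes. (a) If $\epsilon>0$, $(x_n)_{n\in\mathbb{N}}\subset[1,+\infty)$, and $\sum_{p:\,f(p)>1}(f(p)-1)=\infty$, then there exists a sequence $(a_n)_{n\in\mathbb{N}}$ of pairwise coprime positive integers such that $|f(a_n)-x_n|<\epsilon$ and $\gcd(a_n,m)=1$ for all $n\in\mathbb{N}$. (b) If $\epsilon>0$, $(x_n)_{n\in\mathbb{N}}\subset[0,1]$, and $\sum_{p:\,f(p)<1}(1-f(p))=\infty$, then there exists a sequence $(a_n)_{n\in\mathbb{N}}$ of pairwise coprime positive integers such that $|f(a_n)-x_n|<\epsilon$ and $\gcd(a_n,m)=1$ for all $n\in\mathbb{N}$.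
   Context: A multiplicative function satisfies $f(1)=1$ and $f(ab)=f(a)f(b)$ whenever $\gcd(a,b)=1$. Sums indexed by $p$ run over primes. *)

theory Defs
  imports "HOL-Analysis.Analysis" "HOL-Computational_Algebra.Primes"
begin

definition multiplicative :: "(nat \<Rightarrow> real) \<Rightarrow> bool" where
  "multiplicative f \<longleftrightarrow> f 1 = 1 \<and> (\<forall>a b. coprime a b \<longrightarrow> f (a * b) = f a * f b)"

end

theory Submission
  imports Defs
begin


lemma mult_prod_primes:
  assumes "multiplicative f" "finite S" "\<forall>p\<in>S. prime p"
  shows "f (\<Prod>S) = (\<Prod>p\<in>S. f p)"
  using assms(2,3)
proof (induction S rule: finite_induct)
  case empty then show ?case using assms(1) by (simp add: multiplicative_def)
next
  case (insert p S)
  have "coprime p (\<Prod>S)"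
    by (rule prod_coprime_right) (use insert in \<open>auto intro: primes_coprime\<close>)
  then show ?case using insert assms(1) by (simp add: multiplicative_def)
qed

lemma prime_dvd_prod_primes:
  assumes "finite S" "\<forall>p\<in>S. prime p" "prime (q::nat)" "q dvd \<Prod>S"
  shows "q \<in> S"
proof -
  from assms obtain p where "p \<in> S" "q dvd p" using prime_dvd_prod_iff[of S q id] by auto
  then show ?thesis using assms by (metis primes_dvd_imp_eq)
qed

lemma prod_primes_pos: "finite S \<Longrightarrow> \<forall>p\<in>S. prime (p::nat) \<Longrightarrow> \<Prod>S > 0"
  by (metis gr0I not_prime_0 prod_zero_iff)

lemma not_coprime_prime:
  assumes "\<not> coprime (a::nat) b" shows "\<exists>q. prime q \<and> q dvd a \<and> q dvd b"
proof -
  have "gcd a b \<noteq> 1" using assms by (simp add: coprime_iff_gcd_eq_1)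
  then obtain q where "prime q" "q dvd gcd a b" using prime_factor_nat by blast
  then show ?thesis by auto
qed

lemma construct:
  fixes f :: "nat \<Rightarrow> real" and m :: nat and x :: "nat \<Rightarrow> real"
  assumes mult: "multiplicative f" and m1: "m \<ge> 1"
    and H: "\<And>n L. \<exists>S. finite S \<and> (\<forall>p\<in>S. prime p \<and> L < p) \<and> \<bar>(\<Prod>p\<in>S. f p) - x n\<bar> < \<epsilon>"
  shows "\<exists>a :: nat \<Rightarrow> nat. (\<forall>n. a n > 0) \<and>
           (\<forall>i j. i \<noteq> j \<longrightarrow> coprime (a i) (a j)) \<and>
           (\<forall>n. \<bar>f (a n) - x n\<bar> < \<epsilon> \<and> coprime (a n) m)"
proof -
  obtain Sf where Sf: "\<And>n L. finite (Sf n L) \<and> (\<forall>p\<in>Sf n L. prime p \<and> L < p) \<and> \<bar>(\<Prod>p\<in>Sf n L. f p) - x n\<bar> < \<epsilon>"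
  proof -
    define Sf where "Sf n L = (SOME S. finite S \<and> (\<forall>p\<in>S. prime p \<and> L < p) \<and> \<bar>(\<Prod>p\<in>S. f p) - x n\<bar> < \<epsilon>)" for n L
    have "\<And>n L. finite (Sf n L) \<and> (\<forall>p\<in>Sf n L. prime p \<and> L < p) \<and> \<bar>(\<Prod>p\<in>Sf n L. f p) - x n\<bar> < \<epsilon>"
      unfolding Sf_def by (rule someI_ex) (rule H)
    then show ?thesis using that by blast
  qed
  define L where "L = rec_nat m (\<lambda>n l. l + \<Prod>(Sf n l))"
  have L0: "L 0 = m" and LS: "\<And>n. L (Suc n) = L n + \<Prod>(Sf n (L n))" by (simp_all add: L_def)
  define a where "a n = \<Prod>(Sf n (L n))" for n
  have fin: "finite (Sf n (L n))" and pr: "\<forall>p\<in>Sf n (L n). prime p" and gt: "\<forall>p\<in>Sf n (L n). L n < p" for n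
    using Sf by auto
  have apos: "a n > 0" for n unfolding a_def using prod_primes_pos fin pr by blast
  have Lmono: "L i \<le> L j" if "i \<le> j" for i j
    using that by (induction j) (auto simp: LS le_Suc_eq)
  have bigp: "q > L n" if "prime q" "q dvd a n" for q n
    using prime_dvd_prod_primes[OF fin pr that(1)] that gt unfolding a_def by blast
  have cop: "coprime (a i) (a j)" if "i < j" for i j
  proof (rule ccontr)
    assume "\<not> coprime (a i) (a j)"
    then obtain q where q: "prime q" "q dvd a i" "q dvd a j"
      using not_coprime_prime by blast
    have "q \<le> a i" using q apos dvd_imp_le by blast
    moreover have "L (Suc i) \<le> L j" using Lmono that by simp
    moreover have "q > L j" using bigp q by blast
    ultimately show False by (simp add: LS a_def)
  qed
  show ?thesis
  proof (intro exI[of _ a] conjI allI impI)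
    fix n show "a n > 0" by (rule apos)
  next
    fix i j :: nat assume "i \<noteq> j"
    then show "coprime (a i) (a j)" using cop by (metis coprime_commute linorder_neqE_nat)
  next
    fix n show "\<bar>f (a n) - x n\<bar> < \<epsilon>"
      using Sf[of n "L n"] mult_prod_primes[OF mult fin pr] unfolding a_def by simp
  next
    fix n show "coprime (a n) m"
    proof (rule ccontr)
      assume "\<not> coprime (a n) m"
      then obtain q where q: "prime q" "q dvd a n" "q dvd m"
        using not_coprime_prime by blast
      have "L 0 \<le> L n" using Lmono by simp
      moreover have "q > L n" using bigp q by blast
      moreover have "m = 0 \<or> q \<le> m" using q dvd_imp_le by blast
      ultimately show False using q(1) L0 m1 by auto
    qed
  qed
qed


lemma prod_ge_sum:
  fixes f :: "nat \<Rightarrow> real"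
  assumes "finite S" "\<forall>p\<in>S. f p \<ge> 1"
  shows "1 + (\<Sum>p\<in>S. f p - 1) \<le> (\<Prod>p\<in>S. f p)"
  using assms
proof (induction S rule: finite_induct)
  case empty then show ?case by simp
next
  case (insert p S)
  define P where "P = (\<Prod>p\<in>S. f p)"
  define s where "s = (\<Sum>p\<in>S. f p - 1)"
  have h: "1 + s \<le> P" "f p \<ge> 1" "s \<ge> 0" using insert by (auto simp: P_def s_def intro: sum_nonneg)
  have "f p * P \<ge> f p * (1 + s)" using h by (intro mult_left_mono) auto
  moreover have "f p * (1 + s) \<ge> 1 + (f p - 1 + s)" proof -
    have "s \<le> s * f p" using h mult_left_mono[of 1 "f p" s] by simp
    then show ?thesis by (simp add: algebra_simps)
  qed
  ultimately have "1 + (f p - 1 + s) \<le> f p * P" by linarith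
  then show ?case using insert by (simp add: P_def[symmetric] s_def[symmetric])
qed

lemma prod_le_sum:
  fixes f :: "nat \<Rightarrow> real"
  assumes "finite S" "\<forall>p\<in>S. 0 \<le> f p \<and> f p \<le> 1"
  shows "(\<Prod>p\<in>S. f p) * (1 + (\<Sum>p\<in>S. 1 - f p)) \<le> 1"
  using assms
proof (induction S rule: finite_induct)
  case empty then show ?case by simp
next
  case (insert p S)
  define P where "P = (\<Prod>p\<in>S. f p)"
  define s where "s = (\<Sum>p\<in>S. 1 - f p)"
  have h: "P * (1 + s) \<le> 1" "0 \<le> f p" "f p \<le> 1" "s \<ge> 0" "P \<ge> 0"
    using insert by (auto simp: P_def s_def intro: sum_nonneg prod_nonneg)
  have "f p * (1 + (1 - f p) + s) \<le> 1 + s"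
  proof -
    have "f p * (2 - f p) \<le> 1" proof -
      have "0 \<le> (f p - 1)^2" by simp
      then show ?thesis by (simp add: power2_eq_square algebra_simps)
    qed
    moreover have "f p * s \<le> s" using h by (simp add: mult_left_le_one_le)
    ultimately show ?thesis by (simp add: algebra_simps)
  qed
  then have "P * (f p * (1 + (1 - f p) + s)) \<le> P * (1 + s)" using h by (intro mult_left_mono) auto
  then have "f p * P * (1 + ((1 - f p) + s)) \<le> 1" using h by (simp add: algebra_simps)
  then show ?case using insert by (simp add: P_def[symmetric] s_def[symmetric])
qed

lemma div_sum:
  fixes h :: "nat \<Rightarrow> real"
  assumes ns: "\<not> (h summable_on A)" and nn: "\<forall>p\<in>A. h p \<ge> 0"
  shows "\<exists>k. (\<Sum>p\<in>{p\<in>A. N \<le> p \<and> p < k}. h p) > B"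
proof (rule ccontr)
  assume "\<not> ?thesis"
  then have bd: "\<And>k. (\<Sum>p\<in>{p\<in>A. N \<le> p \<and> p < k}. h p) \<le> B" by (simp add: not_less)
  define C where "C = (\<Sum>p\<in>{p\<in>A. p < N}. h p)"
  have "bdd_above (sum h ` {F. F\<subseteq>A \<and> finite F})"
  proof (rule bdd_aboveI2)
    fix F assume F: "F \<in> {F. F\<subseteq>A \<and> finite F}"
    define k where "k = Suc (Max (insert 0 F))"
    have sub: "F \<subseteq> {p\<in>A. p < N} \<union> {p\<in>A. N \<le> p \<and> p < k}"
    proof
      fix p assume "p \<in> F"
      then have "p \<le> Max (insert 0 F)" using F by auto
      then show "p \<in> {p\<in>A. p < N} \<union> {p\<in>A. N \<le> p \<and> p < k}" using F \<open>p\<in>F\<close> by (auto simp: k_def less_Suc_eq_le)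
    qed
    have "sum h F \<le> sum h ({p\<in>A. p < N} \<union> {p\<in>A. N \<le> p \<and> p < k})"
      by (rule sum_mono2) (use sub nn in auto)
    also have "\<dots> = C + (\<Sum>p\<in>{p\<in>A. N \<le> p \<and> p < k}. h p)"
      unfolding C_def by (rule sum.union_disjoint) auto
    also have "\<dots> \<le> C + B" using bd by simp
    finally show "sum h F \<le> C + B" .
  qed
  then have "h summable_on A" using nn by (intro nonneg_bdd_above_summable_on) auto
  with ns show False by simp
qed

lemma ev_close:
  fixes f :: "nat \<Rightarrow> real"
  assumes lim: "(f \<longlongrightarrow> 1) (inf at_top (principal {p. prime p}))" and d: "\<delta> > 0"
  shows "\<exists>N. \<forall>p\<ge>N. prime p \<longrightarrow> \<bar>f p - 1\<bar> < \<delta>"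
proof -
  have "eventually (\<lambda>p. dist (f p) 1 < \<delta>) (inf at_top (principal {p. prime p}))"
    using tendstoD[OF lim d] .
  then have "eventually (\<lambda>p. p \<in> {p. prime p} \<longrightarrow> dist (f p) 1 < \<delta>) at_top"
    by (simp add: eventually_inf_principal)
  then show ?thesis by (auto simp: eventually_at_top_linorder dist_real_def)
qed



lemma core_a:
  fixes f :: "nat \<Rightarrow> real"
  assumes lim: "(f \<longlongrightarrow> 1) (inf at_top (principal {p. prime p}))"
    and ns: "\<not> ((\<lambda>p. f p - 1) summable_on {p. prime p \<and> f p > 1})"
    and y: "y \<ge> 1" and e: "\<epsilon> > 0"
  shows "\<exists>S. finite S \<and> (\<forall>p\<in>S. prime p \<and> L < p) \<and> \<bar>(\<Prod>p\<in>S. f p) - y\<bar> < \<epsilon>"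
proof -
  define \<delta> where "\<delta> = \<epsilon> / (2 * y)"
  have d: "\<delta> > 0" using e y by (simp add: \<delta>_def)
  have yd: "y * \<delta> < \<epsilon>" using e y by (simp add: \<delta>_def)
  obtain N0 where N0: "\<forall>p\<ge>N0. prime p \<longrightarrow> \<bar>f p - 1\<bar> < \<delta>" using ev_close[OF lim d] by blast
  define N where "N = max N0 (Suc L)"
  define A where "A = {p. prime p \<and> f p > 1}"
  define T where "T k = {p\<in>A. N \<le> p \<and> p < k}" for k
  define g where "g k = (\<Prod>p\<in>T k. f p)" for k
  have finT: "finite (T k)" for k by (simp add: T_def)
  have TA: "\<forall>p\<in>T k. prime p \<and> L < p \<and> f p > 1 \<and> f p < 1 + \<delta>" for k
    using N0 by (auto simp: T_def A_def N_def)
  have "\<exists>k. (\<Sum>p\<in>T k. f p - 1) > y" unfolding T_def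
    by (rule div_sum) (use ns in \<open>auto simp: A_def\<close>)
  then obtain k where k: "(\<Sum>p\<in>T k. f p - 1) > y" by blast
  have "g k \<ge> 1 + (\<Sum>p\<in>T k. f p - 1)" unfolding g_def
    by (rule prod_ge_sum[OF finT]) (use TA[of k] in \<open>auto intro: less_imp_le\<close>)
  then have ex: "\<exists>k. g k > y" using k by (intro exI[of _ k]) linarith
  define k0 where "k0 = (LEAST k. g k > y)"
  have gk0: "g k0 > y" unfolding k0_def using ex by (rule LeastI_ex)
  have T0: "T 0 = {}" by (simp add: T_def)
  have "k0 \<noteq> 0"
  proof
    assume "k0 = 0" then show False using gk0 y by (simp add: g_def T0)
  qed
  then obtain j where j: "k0 = Suc j" by (cases k0) auto
  have gj: "g j \<le> y" using not_less_Least[of j "\<lambda>k. g k > y"] j k0_def by force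
  have gjnn: "g j \<ge> 0" unfolding g_def by (rule prod_nonneg) (use TA[of j] in fastforce)
  have TS: "T (Suc j) = (if j \<in> A \<and> N \<le> j then insert j (T j) else T j)"
    by (auto simp: T_def less_Suc_eq)
  show ?thesis
  proof (cases "j \<in> A \<and> N \<le> j")
    case True
    then have jT: "j \<in> T (Suc j)" "j \<notin> T j" by (auto simp: T_def)
    have gS: "g (Suc j) = f j * g j" using True TS finT jT unfolding g_def by simp
    have fj: "f j < 1 + \<delta>" using TA[of "Suc j"] jT by blast
    have "f j * g j \<le> (1 + \<delta>) * g j" using fj gjnn by (intro mult_right_mono) auto
    also have "\<dots> \<le> (1 + \<delta>) * y" using gj d by (intro mult_left_mono) auto
    finally have "g (Suc j) \<le> y + y * \<delta>" using gS by (simp add: algebra_simps)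
    then have "\<bar>g (Suc j) - y\<bar> < \<epsilon>" using gk0 j yd by auto
    then show ?thesis unfolding g_def by (intro exI[of _ "T (Suc j)"]) (use finT TA[of "Suc j"] in auto)
  next
    case False
    then have "T (Suc j) = T j" by (simp only: TS if_not_P[OF False] if_False)
      then have "g (Suc j) = g j" unfolding g_def by simp
    then show ?thesis using gj gk0 j by simp
  qed
qed

lemma core_b:
  fixes f :: "nat \<Rightarrow> real"
  assumes lim: "(f \<longlongrightarrow> 1) (inf at_top (principal {p. prime p}))"
    and ns: "\<not> ((\<lambda>p. 1 - f p) summable_on {p. prime p \<and> f p < 1})"
    and y: "0 \<le> y" "y \<le> 1" and e: "\<epsilon> > 0"
  shows "\<exists>S. finite S \<and> (\<forall>p\<in>S. prime p \<and> L < p) \<and> \<bar>(\<Prod>p\<in>S. f p) - y\<bar> < \<epsilon>"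
proof -
  define \<delta> where "\<delta> = min (1/2) (\<epsilon> / 2)"
  have d: "\<delta> > 0" "\<delta> \<le> 1/2" "\<delta> \<le> \<epsilon>/2" using e by (auto simp: \<delta>_def)
  obtain N0 where N0: "\<forall>p\<ge>N0. prime p \<longrightarrow> \<bar>f p - 1\<bar> < \<delta>" using ev_close[OF lim d(1)] by blast
  define N where "N = max N0 (Suc L)"
  define A where "A = {p. prime p \<and> f p < 1}"
  define T where "T k = {p\<in>A. N \<le> p \<and> p < k}" for k
  define g where "g k = (\<Prod>p\<in>T k. f p)" for k
  define z where "z = y + \<epsilon> / 2"
  have z: "z > 0" using y e by (simp add: z_def)
  have finT: "finite (T k)" for k by (simp add: T_def)
  have TA: "\<forall>p\<in>T k. prime p \<and> L < p \<and> f p < 1 \<and> f p > 1 - \<delta>" for k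
    using N0 by (auto simp: T_def A_def N_def)
  have TA': "\<forall>p\<in>T k. 0 \<le> f p \<and> f p \<le> 1" for k using TA[of k] d by fastforce
  have g01: "0 \<le> g k \<and> g k \<le> 1" for k
    unfolding g_def using TA'[of k] by (simp add: prod_nonneg prod_le_1)
  have "\<exists>k. (\<Sum>p\<in>T k. 1 - f p) > 1 / z" unfolding T_def
    by (rule div_sum) (use ns in \<open>auto simp: A_def\<close>)
  then obtain k where k: "(\<Sum>p\<in>T k. 1 - f p) > 1 / z" by blast
  have pk: "g k * (1 + (\<Sum>p\<in>T k. 1 - f p)) \<le> 1" unfolding g_def
    by (rule prod_le_sum[OF finT]) (use TA'[of k] in auto)
  have "g k < z"
  proof (rule ccontr)
    assume "\<not> g k < z"
    then have "g k \<ge> z" by simp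
    then have "z * (1 + (\<Sum>p\<in>T k. 1 - f p)) \<le> 1" proof -
      have "0 \<le> 1 + (\<Sum>p\<in>T k. 1 - f p)" proof -
        have "1/z > 0" using z by simp
        then show ?thesis using k by linarith
      qed
      then have "z * (1 + (\<Sum>p\<in>T k. 1 - f p)) \<le> g k * (1 + (\<Sum>p\<in>T k. 1 - f p))"
        using \<open>g k \<ge> z\<close> by (rule mult_right_mono[rotated])
      then show ?thesis using pk by linarith
    qed
    moreover have "z * (\<Sum>p\<in>T k. 1 - f p) > z * (1/z)" using k z by (intro mult_strict_left_mono) auto
    ultimately show False using z by (simp add: algebra_simps)
  qed
  then have ex: "\<exists>k. g k < z" by blast
  define k0 where "k0 = (LEAST k. g k < z)"
  have gk0: "g k0 < z" unfolding k0_def using ex by (rule LeastI_ex)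
  have T0: "T 0 = {}" by (simp add: T_def)
  show ?thesis
  proof (cases "k0 = 0")
    case True
    then have "g k0 = 1" by (simp add: g_def T0)
    then have "\<bar>g k0 - y\<bar> < \<epsilon>" using gk0 y e unfolding z_def by linarith
    then show ?thesis unfolding g_def by (intro exI[of _ "T k0"]) (use finT TA[of k0] in auto)
  next
    case False
    then obtain j where j: "k0 = Suc j" by (cases k0) auto
    have "j < k0" using j by simp
    then have "\<not> g j < z" unfolding k0_def by (rule not_less_Least)
    then have gj: "g j \<ge> z" by simp
    have TS: "T (Suc j) = (if j \<in> A \<and> N \<le> j then insert j (T j) else T j)"
      by (auto simp: T_def less_Suc_eq)
    show ?thesis
    proof (cases "j \<in> A \<and> N \<le> j")
      case True
      then have jT: "j \<in> T (Suc j)" "j \<notin> T j" by (auto simp: T_def)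
      have gS: "g (Suc j) = f j * g j" using True TS finT jT unfolding g_def by simp
      have fj: "f j > 1 - \<delta>" using TA[of "Suc j"] jT by blast
      have "f j * g j \<ge> (1 - \<delta>) * g j" using fj g01[of j] by (intro mult_right_mono) auto
      moreover have "(1 - \<delta>) * g j \<ge> g j - \<delta>" using g01[of j] d by (simp add: algebra_simps)
      ultimately have "g (Suc j) \<ge> y" using gS gj d unfolding z_def by linarith
      moreover have "g (Suc j) < y + \<epsilon>/2" using gk0 j unfolding z_def by simp
      ultimately have "\<bar>g (Suc j) - y\<bar> < \<epsilon>" using e by linarith
      then show ?thesis unfolding g_def by (intro exI[of _ "T (Suc j)"]) (use finT TA[of "Suc j"] in auto)
    next
      case False
      then have "T (Suc j) = T j" by (simp only: TS if_not_P[OF False] if_False)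
      then have "g (Suc j) = g j" unfolding g_def by simp
      then show ?thesis using gj gk0 j by simp
    qed
  qed
qed

theorem lemma2p2:
  fixes f :: "nat \<Rightarrow> real" and m :: nat
  assumes m: "m \<ge> 1"
    and mult: "multiplicative f"
    and lim: "(f \<longlongrightarrow> 1) (inf at_top (principal {p. prime p}))"
  shows
    "(\<forall>(\<epsilon>::real) (x :: nat \<Rightarrow> real).
        \<epsilon> > 0 \<longrightarrow> (\<forall>n. x n \<ge> 1) \<longrightarrow>
        \<not> ((\<lambda>p. f p - 1) summable_on {p. prime p \<and> f p > 1}) \<longrightarrow>
        (\<exists>a :: nat \<Rightarrow> nat. (\<forall>n. a n > 0) \<and>
           (\<forall>i j. i \<noteq> j \<longrightarrow> coprime (a i) (a j)) \<and>
           (\<forall>n. \<bar>f (a n) - x n\<bar> < \<epsilon> \<and> coprime (a n) m)))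
   \<and>
    (\<forall>(\<epsilon>::real) (x :: nat \<Rightarrow> real).
        \<epsilon> > 0 \<longrightarrow> (\<forall>n. 0 \<le> x n \<and> x n \<le> 1) \<longrightarrow>
        \<not> ((\<lambda>p. 1 - f p) summable_on {p. prime p \<and> f p < 1}) \<longrightarrow>
        (\<exists>a :: nat \<Rightarrow> nat. (\<forall>n. a n > 0) \<and>
           (\<forall>i j. i \<noteq> j \<longrightarrow> coprime (a i) (a j)) \<and>
           (\<forall>n. \<bar>f (a n) - x n\<bar> < \<epsilon> \<and> coprime (a n) m)))"
proof (intro conjI allI impI)
  fix \<epsilon> :: real and x :: "nat \<Rightarrow> real"
  assume e: "\<epsilon> > 0" and x: "\<forall>n. x n \<ge> 1"
    and ns: "\<not> ((\<lambda>p. f p - 1) summable_on {p. prime p \<and> f p > 1})"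
  show "\<exists>a :: nat \<Rightarrow> nat. (\<forall>n. a n > 0) \<and>
           (\<forall>i j. i \<noteq> j \<longrightarrow> coprime (a i) (a j)) \<and>
           (\<forall>n. \<bar>f (a n) - x n\<bar> < \<epsilon> \<and> coprime (a n) m)"
    by (rule construct[OF mult m]) (rule core_a[OF lim ns _ e], use x in blast)
next
  fix \<epsilon> :: real and x :: "nat \<Rightarrow> real"
  assume e: "\<epsilon> > 0" and x: "\<forall>n. 0 \<le> x n \<and> x n \<le> 1"
    and ns: "\<not> ((\<lambda>p. 1 - f p) summable_on {p. prime p \<and> f p < 1})"
  show "\<exists>a :: nat \<Rightarrow> nat. (\<forall>n. a n > 0) \<and>
           (\<forall>i j. i \<noteq> j \<longrightarrow> coprime (a i) (a j)) \<and>
           (\<forall>n. \<bar>f (a n) - x n\<bar> < \<epsilon> \<and> coprime (a n) m)"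
    by (rule construct[OF mult m]) (rule core_b[OF lim ns _ _ e], use x in blast, use x in blast)
qed

end
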